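(* Let $m\ge 3$. Let $X_1,\dots,X_m,Y_1,\dots,Y_m\in\mathbb{C}^n$ and $\alpha_1,\dots,\alpha_m\in\mathbb{Z}_{\ge0}^n$, and for a point $Z=(z_1,\dots,z_n)$ and $\alpha=(\alpha_{1},\dots,\alpha_{n})$ write $Z^{\alpha}=z_1^{\alpha_1}\cdots z_n^{\alpha_n}$. Let $$V_m^{(1)}=\det\big(X_i^{\alpha_j}\big)_{i,j=1}^m,\qquad V_m^{(2)}=\det\big(Y_i^{\alpha_j}\big)_{i,j=1}^m,$$ $$M=\max_{i,j}\{|X_i^{\alpha_j}|,|Y_i^{\alpha_j}|\},$$ $$B=\max_{i,j,k}\Big\{|X_i^{\alpha_j}-X_i^{\alpha_k}|,\ |X_j^{\alpha_i}-X_k^{\alpha_i}|,\ |Y_i^{\alpha_j}-Y_i^{\alpha_k}|,\ |Y_j^{\alpha_i}-Y_k^{\alpha_i}|\Big\},$$ $$\varepsilon=\max_{i,j}|X_i^{\alpha_j}-Y_i^{\alpha_j}|,$$ with all indices ranging over $1,\dots,m$. Then $$|V_m^{(1)}-V_m^{(2)}|\le m\cdot m!\,M^{m-2}B\,\varepsilon.$$ *)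

theory Defs
  imports Complex_Main "Jordan_Normal_Form.Determinant"
begin

text \<open>Points of C^n are functions nat => complex (only coordinates 0..n-1 matter),
  multi-indices are functions nat => nat. Z^alpha = prod_{k<n} z_k^{alpha_k}.\<close>
definition mpow :: "nat \<Rightarrow> (nat \<Rightarrow> complex) \<Rightarrow> (nat \<Rightarrow> nat) \<Rightarrow> complex" where
  "mpow n Z \<alpha> = (\<Prod>k<n. Z k ^ \<alpha> k)"

definition gvmat :: "nat \<Rightarrow> nat \<Rightarrow> (nat \<Rightarrow> nat \<Rightarrow> complex) \<Rightarrow> (nat \<Rightarrow> nat \<Rightarrow> nat) \<Rightarrow> complex mat" where
  "gvmat n m Z \<alpha> = mat m m (\<lambda>(i,j). mpow n (Z i) (\<alpha> j))"

end

theory Submission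
  imports Defs
begin

lemma prod_bound:
  fixes N :: "complex mat" and B M :: real
  assumes p: "p permutes {0..<n}" and n: "1 < n"
    and M: "\<And>i j. i < n \<Longrightarrow> j < n \<Longrightarrow> j \<noteq> 1 \<Longrightarrow> cmod (f i j) \<le> M"
    and B: "\<And>i. i < n \<Longrightarrow> cmod (f i 1) \<le> B"
    and M0: "0 \<le> M" and B0: "0 \<le> B"
  shows "cmod (\<Prod>i = 0..<n. f i (p i)) \<le> B * M ^ (n - 1)"
proof -
  define g where "g i = (if p i = 1 then B else M)" for i
  have "cmod (\<Prod>i = 0..<n. f i (p i)) = (\<Prod>i = 0..<n. cmod (f i (p i)))"
    by (simp add: prod_norm)
  also have "\<dots> \<le> (\<Prod>i = 0..<n. g i)"
  proof (rule prod_mono)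
    fix i assume i: "i \<in> {0..<n}"
    have "p i < n" using p i by (metis atLeastLessThan_iff permutes_in_image)
    then show "0 \<le> cmod (f i (p i)) \<and> cmod (f i (p i)) \<le> g i"
      using i M B unfolding g_def by (cases "p i = 1") auto
  qed
  also have "\<dots> = B * M ^ (n - 1)"
  proof -
    obtain i0 where i0: "i0 \<in> {0..<n}" "p i0 = 1"
      using p n by (metis atLeastLessThan_iff le0 permutes_image image_iff)
    have fin: "finite {0..<n}" by simp
    have "(\<Prod>i = 0..<n. g i) = g i0 * (\<Prod>i \<in> {0..<n} - {i0}. g i)"
      using prod.remove[OF fin i0(1)] by simp
    also have "(\<Prod>i \<in> {0..<n} - {i0}. g i) = (\<Prod>i \<in> {0..<n} - {i0}. M)"
    proof (rule prod.cong)
      fix i assume "i \<in> {0..<n} - {i0}"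
      then have "p i \<noteq> p i0" using p i0 by (metis DiffD2 insertI1 permutes_inj injD)
      then show "g i = M" using i0 g_def by simp
    qed simp
    also have "\<dots> = M ^ (n - 1)" using i0 by simp
    finally show ?thesis using i0 g_def by simp
  qed
  finally show ?thesis .
qed

lemma det_bound:
  fixes N :: "complex mat" and B M :: real
  assumes N: "N \<in> carrier_mat n n" and n: "2 \<le> n"
    and M: "\<And>i j. i < n \<Longrightarrow> j < n \<Longrightarrow> cmod (N $$ (i,j)) \<le> M"
    and B: "\<And>i j j'. i < n \<Longrightarrow> j < n \<Longrightarrow> j' < n \<Longrightarrow> cmod (N $$ (i,j) - N $$ (i,j')) \<le> B"
  shows "cmod (det N) \<le> fact n * M ^ (n - 1) * B"
proof -
  have M0: "0 \<le> M" using M[of 0 0] n by (meson norm_ge_zero order_trans zero_less_numeral less_le_trans)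
  have B0: "0 \<le> B" using B[of 0 0 0] n by (meson norm_ge_zero order_trans zero_less_numeral less_le_trans)
  define N' where "N' = addcol (-1) 1 0 N"
  have N': "N' \<in> carrier_mat n n" using N unfolding N'_def mat_addcol_def by auto
  have dd: "det N' = det N" unfolding N'_def using N n by (intro det_addcol) auto
  have e: "i < n \<Longrightarrow> j < n \<Longrightarrow> N' $$ (i,j) = (if j = 1 then N $$ (i,1) - N $$ (i,0) else N $$ (i,j))" for i j
    using N unfolding N'_def mat_addcol_def by auto
  have "cmod (det N) = cmod (\<Sum> p \<in> {p. p permutes {0 ..< n}}. signof p * (\<Prod> i = 0 ..< n. N' $$ (i, p i)))"
    using dd det_def'[OF N'] by simp
  also have "\<dots> \<le> (\<Sum> p \<in> {p. p permutes {0 ..< n}}. cmod (signof p * (\<Prod> i = 0 ..< n. N' $$ (i, p i))))"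
    by (rule norm_sum)
  also have "\<dots> \<le> (\<Sum> p \<in> {p. p permutes {0 ..< n}}. B * M ^ (n - 1))"
  proof (rule sum_mono)
    fix p assume "p \<in> {p. p permutes {0 ..< n}}"
    then have p: "p permutes {0..<n}" by simp
    have "cmod (signof p :: complex) = 1" by (simp add: sign_def)
    moreover have "cmod (\<Prod> i = 0 ..< n. N' $$ (i, p i)) \<le> B * M ^ (n - 1)"
      by (rule prod_bound[OF p _ _ _ M0 B0, where f = "\<lambda>i j. N' $$ (i,j)"]) (use n e M B in auto)
    ultimately show "cmod (signof p * (\<Prod> i = 0 ..< n. N' $$ (i, p i))) \<le> B * M ^ (n - 1)"
      by (simp add: norm_mult)
  qed
  also have "\<dots> = fact n * M ^ (n - 1) * B"
    by (simp add: card_permutations)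
  finally show ?thesis .
qed

lemma main_bound:
  fixes a c :: "nat \<Rightarrow> nat \<Rightarrow> complex" and M B e :: real
  assumes m: "3 \<le> m"
    and Ma: "\<And>i j. i < m \<Longrightarrow> j < m \<Longrightarrow> cmod (a i j) \<le> M"
    and Mc: "\<And>i j. i < m \<Longrightarrow> j < m \<Longrightarrow> cmod (c i j) \<le> M"
    and Ba: "\<And>i j j'. i < m \<Longrightarrow> j < m \<Longrightarrow> j' < m \<Longrightarrow> cmod (a i j - a i j') \<le> B"
    and Bc: "\<And>i j j'. i < m \<Longrightarrow> j < m \<Longrightarrow> j' < m \<Longrightarrow> cmod (c i j - c i j') \<le> B"
    and E: "\<And>i j. i < m \<Longrightarrow> j < m \<Longrightarrow> cmod (a i j - c i j) \<le> e"
  shows "cmod (det (mat m m (\<lambda>(i,j). a i j)) - det (mat m m (\<lambda>(i,j). c i j)))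
          \<le> real m * fact m * M ^ (m - 2) * B * e"
proof -
  define T where "T k = mat m m (\<lambda>(i,j). if i < k then c i j else a i j)" for k
  have T: "T k \<in> carrier_mat m m" for k unfolding T_def by simp
  have T0: "T 0 = mat m m (\<lambda>(i,j). a i j)" unfolding T_def by (rule eq_matI) auto
  have Tm: "T m = mat m m (\<lambda>(i,j). c i j)" unfolding T_def by (rule eq_matI) auto
  define K where "K = fact (m - 1) * M ^ (m - 2) * B"
  have m0: "0 < m" using m by simp
  have e0: "0 \<le> e" by (rule order_trans[OF norm_ge_zero E[OF m0 m0]])
  have M0: "0 \<le> M" by (rule order_trans[OF norm_ge_zero Ma[OF m0 m0]])
  have B0: "0 \<le> B" by (rule order_trans[OF norm_ge_zero Ba[OF m0 m0 m0]])
  have K0: "0 \<le> K" unfolding K_def using M0 B0 by simp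
  have cof: "cmod (cofactor (T k) k j) \<le> K" if k: "k < m" and j: "j < m" for k j
  proof -
    have "cmod (cofactor (T k) k j) = cmod (det (mat_delete (T k) k j))"
      unfolding cofactor_def by (simp add: norm_mult norm_power)
    also have "\<dots> \<le> fact (m - 1) * M ^ (m - 1 - 1) * B"
    proof (rule det_bound)
      show "mat_delete (T k) k j \<in> carrier_mat (m - 1) (m - 1)" using mat_delete_carrier[OF T] .
      show "2 \<le> m - 1" using m by simp
      fix i' j' assume i': "i' < m - 1" and j': "j' < m - 1"
      define r where "r = (if i' < k then i' else Suc i')"
      have r: "r < m" using i' unfolding r_def by auto
      have idx: "mat_delete (T k) k j $$ (i', j'') = (if r < k then c r (if j'' < j then j'' else Suc j'')
                    else a r (if j'' < j then j'' else Suc j''))" if "j'' < m - 1" for j''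
        using i' that unfolding mat_delete_def T_def r_def by simp
      have cj: "(if j'' < j then j'' else Suc j'') < m" if "j'' < m - 1" for j''
        using that by auto
      show "cmod (mat_delete (T k) k j $$ (i', j')) \<le> M"
        using Ma[OF r cj[OF j']] Mc[OF r cj[OF j']] unfolding idx[OF j'] by simp
      fix j'' assume j'': "j'' < m - 1"
      show "cmod (mat_delete (T k) k j $$ (i', j') - mat_delete (T k) k j $$ (i', j'')) \<le> B"
        using Ba[OF r cj[OF j'] cj[OF j'']] Bc[OF r cj[OF j'] cj[OF j'']] unfolding idx[OF j'] idx[OF j''] by simp
    qed
    also have "\<dots> = K" unfolding K_def by (simp add: diff_diff_add numeral_2_eq_2)
    finally show ?thesis .
  qed
  have step: "det (T k) - det (T (Suc k)) = (\<Sum>j<m. (a k j - c k j) * cofactor (T k) k j)"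
    if k: "k < m" for k
  proof -
    have md: "mat_delete (T (Suc k)) k j = mat_delete (T k) k j" for j
    proof (rule eq_matI)
      fix i' j' assume "i' < dim_row (mat_delete (T k) k j)" "j' < dim_col (mat_delete (T k) k j)"
      then have "i' < m - 1" "j' < m - 1" unfolding T_def by auto
      then show "mat_delete (T (Suc k)) k j $$ (i', j') = mat_delete (T k) k j $$ (i', j')"
        unfolding mat_delete_def T_def by simp
    qed (simp_all add: T_def)
    have "det (T k) = (\<Sum>j<m. T k $$ (k,j) * cofactor (T k) k j)"
      by (rule laplace_expansion_row[OF T k])
    moreover have "det (T (Suc k)) = (\<Sum>j<m. T (Suc k) $$ (k,j) * cofactor (T (Suc k)) k j)"
      by (rule laplace_expansion_row[OF T k])
    moreover have "T k $$ (k,j) = a k j" if "j < m" for j using k that unfolding T_def by simp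
    moreover have "T (Suc k) $$ (k,j) = c k j" if "j < m" for j using k that unfolding T_def by simp
    ultimately have "det (T k) - det (T (Suc k)) = (\<Sum>j<m. a k j * cofactor (T k) k j) - (\<Sum>j<m. c k j * cofactor (T k) k j)"
      by (simp add: cofactor_def md)
    also have "\<dots> = (\<Sum>j<m. (a k j - c k j) * cofactor (T k) k j)"
      by (simp add: sum_subtractf[symmetric] left_diff_distrib)
    finally show ?thesis .
  qed
  have "det (mat m m (\<lambda>(i,j). a i j)) - det (mat m m (\<lambda>(i,j). c i j))
        = (\<Sum>k<m. det (T k) - det (T (Suc k)))"
    using T0 Tm sum_lessThan_telescope'[of "\<lambda>k. det (T k)" m] by simp
  also have "\<dots> = (\<Sum>k<m. \<Sum>j<m. (a k j - c k j) * cofactor (T k) k j)"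
    using step by simp
  finally have eq: "det (mat m m (\<lambda>(i,j). a i j)) - det (mat m m (\<lambda>(i,j). c i j))
        = (\<Sum>k<m. \<Sum>j<m. (a k j - c k j) * cofactor (T k) k j)" .
  have "cmod (\<Sum>k<m. \<Sum>j<m. (a k j - c k j) * cofactor (T k) k j) \<le> (\<Sum>k<m. \<Sum>j<m. e * K)"
  proof -
    have "cmod (\<Sum>k<m. \<Sum>j<m. (a k j - c k j) * cofactor (T k) k j)
          \<le> (\<Sum>k<m. \<Sum>j<m. cmod ((a k j - c k j) * cofactor (T k) k j))"
      by (rule order_trans[OF norm_sum sum_mono[OF norm_sum]])
    also have "\<dots> \<le> (\<Sum>k<m. \<Sum>j<m. e * K)"
    proof (intro sum_mono)
      fix k j assume "k \<in> {..<m}" "j \<in> {..<m}"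
      then show "cmod ((a k j - c k j) * cofactor (T k) k j) \<le> e * K"
        unfolding norm_mult
        by (intro mult_mono E cof) (auto simp: e0 K0)
    qed
    finally show ?thesis .
  qed
  also have "(\<Sum>k<m. \<Sum>j<m. e * K) = real m * fact m * M ^ (m - 2) * B * e"
  proof -
    have "fact m = real m * fact (m - 1)" using m0 by (rule fact_reduce)
    then show ?thesis unfolding K_def by (simp add: algebra_simps)
  qed
  finally show ?thesis using eq by simp
qed
theorem theorem4:
  fixes n m :: nat and X Y :: "nat \<Rightarrow> nat \<Rightarrow> complex" and \<alpha> :: "nat \<Rightarrow> nat \<Rightarrow> nat"
    and M B \<epsilon> :: real
  assumes "m \<ge> 3"
    and "M = Max ({cmod (mpow n (X i) (\<alpha> j)) | i j. i < m \<and> j < m}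
                 \<union> {cmod (mpow n (Y i) (\<alpha> j)) | i j. i < m \<and> j < m})"
    and "B = Max ({cmod (mpow n (X i) (\<alpha> j) - mpow n (X i) (\<alpha> k)) | i j k. i < m \<and> j < m \<and> k < m}
                 \<union> {cmod (mpow n (X j) (\<alpha> i) - mpow n (X k) (\<alpha> i)) | i j k. i < m \<and> j < m \<and> k < m}
                 \<union> {cmod (mpow n (Y i) (\<alpha> j) - mpow n (Y i) (\<alpha> k)) | i j k. i < m \<and> j < m \<and> k < m}
                 \<union> {cmod (mpow n (Y j) (\<alpha> i) - mpow n (Y k) (\<alpha> i)) | i j k. i < m \<and> j < m \<and> k < m})"
    and "\<epsilon> = Max {cmod (mpow n (X i) (\<alpha> j) - mpow n (Y i) (\<alpha> j)) | i j. i < m \<and> j < m}"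
  shows "cmod (det (gvmat n m X \<alpha>) - det (gvmat n m Y \<alpha>))
           \<le> real m * fact m * M ^ (m - 2) * B * \<epsilon>"
proof -
  let ?a = "\<lambda>i j. mpow n (X i) (\<alpha> j)" and ?c = "\<lambda>i j. mpow n (Y i) (\<alpha> j)"
  have fin2: "finite {f i j | i j. i < m \<and> j < m}" for f :: "nat \<Rightarrow> nat \<Rightarrow> real"
  proof -
    have "{f i j | i j. i < m \<and> j < m} = (\<lambda>(i,j). f i j) ` ({..<m} \<times> {..<m})" by auto
    then show ?thesis by simp
  qed
  have fin3: "finite {f i j k | i j k. i < m \<and> j < m \<and> k < m}" for f :: "nat \<Rightarrow> nat \<Rightarrow> nat \<Rightarrow> real"
  proof -
    have "{f i j k | i j k. i < m \<and> j < m \<and> k < m} \<subseteq> (\<lambda>(i,j,k). f i j k) ` ({..<m} \<times> {..<m} \<times> {..<m})"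
    proof
      fix x assume "x \<in> {f i j k | i j k. i < m \<and> j < m \<and> k < m}"
      then obtain i j k where "x = f i j k" "i < m" "j < m" "k < m" by blast
      then show "x \<in> (\<lambda>(i,j,k). f i j k) ` ({..<m} \<times> {..<m} \<times> {..<m})"
        by (intro image_eqI[where x="(i,j,k)"]) auto
    qed
    then show ?thesis by (rule finite_subset) simp
  qed
  have Ma: "cmod (?a i j) \<le> M" if "i < m" "j < m" for i j
    unfolding assms(2) by (rule Max_ge) (use fin2[of "\<lambda>i j. cmod (?a i j)"] fin2[of "\<lambda>i j. cmod (?c i j)"] in simp, use that in blast)
  have Mc: "cmod (?c i j) \<le> M" if "i < m" "j < m" for i j
    unfolding assms(2) by (rule Max_ge) (use fin2[of "\<lambda>i j. cmod (?a i j)"] fin2[of "\<lambda>i j. cmod (?c i j)"] in simp, use that in blast)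
  have Ba: "cmod (?a i j - ?a i k) \<le> B" if "i < m" "j < m" "k < m" for i j k
    unfolding assms(3) by (rule Max_ge) (use fin3[of "\<lambda>i j k. cmod (?a i j - ?a i k)"] fin3[of "\<lambda>i j k. cmod (?a j i - ?a k i)"] fin3[of "\<lambda>i j k. cmod (?c i j - ?c i k)"] fin3[of "\<lambda>i j k. cmod (?c j i - ?c k i)"] in simp, use that in blast)
  have Bc: "cmod (?c i j - ?c i k) \<le> B" if "i < m" "j < m" "k < m" for i j k
    unfolding assms(3) by (rule Max_ge) (use fin3[of "\<lambda>i j k. cmod (?a i j - ?a i k)"] fin3[of "\<lambda>i j k. cmod (?a j i - ?a k i)"] fin3[of "\<lambda>i j k. cmod (?c i j - ?c i k)"] fin3[of "\<lambda>i j k. cmod (?c j i - ?c k i)"] in simp, use that in blast)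
  have E: "cmod (?a i j - ?c i j) \<le> \<epsilon>" if "i < m" "j < m" for i j
    unfolding assms(4) by (rule Max_ge) (use fin2[of "\<lambda>i j. cmod (?a i j - ?c i j)"] in simp, use that in blast)
  have "cmod (det (mat m m (\<lambda>(i,j). ?a i j)) - det (mat m m (\<lambda>(i,j). ?c i j)))
          \<le> real m * fact m * M ^ (m - 2) * B * \<epsilon>"
    by (rule main_bound[OF assms(1) Ma Mc Ba Bc E])
  then show ?thesis unfolding gvmat_def by simp
qed

end
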